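(* Let $(\mathcal{S}_1,\mathcal{S}_2)$ be an $S$-pair. Then there is at most one element $s \in S$ such that either $S - s \in \mathcal{S}_2$ or $\{t\} \in \mathcal{S}_2$ for every $t \in S - s$.
   Context: Let $S$ be a finite nonempty set and $\mathcal{S}_1, \mathcal{S}_2 \subseteq 2^S$. The pair $(\mathcal{S}_1,\mathcal{S}_2)$ is an $S$-pair if: (S1) for $i=1,2$, if $A,B \in \mathcal{S}_i$ with $B \subset A$ and $|A| = |B|+1$, then every $|B|$-element subset of $A$ lies in $\mathcal{S}_i$; (S2) for $i=1,2$, if $A,B \in \mathcal{S}_i$ with $|A|=|B|$ and $|A\cap B| = |A|-1$, then $A\cup B \in \mathcal{S}_i$; (S3) for $i=1,2$, not every singleton $\{s\}$, $s\in S$, lies in $\mathcal{S}_i$, and $S \notin \mathcal{S}_i$; (S4) for $k = 1,\dots,|S|-1$ and $x\in S$, if every $k$-element subset of $S - x$ lies in $\mathcal{S}_1$, then not every $(|S|-k)$-element subset of $S-x$ lies in $\mathcal{S}_2$. *)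

theory Defs
  imports Main
begin

definition S_axioms :: "'a set \<Rightarrow> 'a set set \<Rightarrow> bool" where
  "S_axioms S F \<longleftrightarrow>
     F \<subseteq> Pow S \<and>
     \<comment> \<open>(S1)\<close>
     (\<forall>A\<in>F. \<forall>B\<in>F. B \<subset> A \<and> card A = card B + 1 \<longrightarrow>
        (\<forall>C. C \<subseteq> A \<and> card C = card B \<longrightarrow> C \<in> F)) \<and>
     \<comment> \<open>(S2)\<close>
     (\<forall>A\<in>F. \<forall>B\<in>F. card A = card B \<and> card (A \<inter> B) + 1 = card A \<longrightarrow> A \<union> B \<in> F) \<and>
     \<comment> \<open>(S3)\<close>
     \<not> (\<forall>s\<in>S. {s} \<in> F) \<and> S \<notin> F"

definition S_pair :: "'a set \<Rightarrow> 'a set set \<Rightarrow> 'a set set \<Rightarrow> bool" where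
  "S_pair S F1 F2 \<longleftrightarrow>
     finite S \<and> S \<noteq> {} \<and>
     S_axioms S F1 \<and> S_axioms S F2 \<and>
     \<comment> \<open>(S4)\<close>
     (\<forall>k\<in>{1..card S - 1}. \<forall>x\<in>S.
        (\<forall>B. B \<subseteq> S - {x} \<and> card B = k \<longrightarrow> B \<in> F1) \<longrightarrow>
        \<not> (\<forall>B. B \<subseteq> S - {x} \<and> card B = card S - k \<longrightarrow> B \<in> F2))"

end

theory Submission
  imports Defs
begin

lemma nonempty_subsets:
  assumes S2: "\<forall>A\<in>F. \<forall>B\<in>F. card A = card B \<and> card (A \<inter> B) + 1 = card A \<longrightarrow> A \<union> B \<in> F"
    and fin: "finite T" and sing: "\<forall>t\<in>T. {t} \<in> F"
  shows "A \<subseteq> T \<Longrightarrow> A \<noteq> {} \<Longrightarrow> A \<in> F"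
proof (induct "card A" arbitrary: A rule: less_induct)
  case less
  have finA: "finite A" using less.prems(1) fin by (rule finite_subset)
  show ?case
  proof (cases "card A = 1")
    case True
    then obtain a where "A = {a}" by (rule card_1_singletonE)
    then show ?thesis using sing less.prems by simp
  next
    case False
    have "card A \<noteq> 0" using finA less.prems(2) by simp
    with False have c2: "card A \<ge> 2" by linarith
    obtain a where a: "a \<in> A" using less.prems(2) by blast
    have "A - {a} \<noteq> {}"
    proof
      assume "A - {a} = {}"
      then have "A = {a}" using a by blast
      then show False using False by simp
    qed
    then obtain b where b: "b \<in> A - {a}" by blast
    have ab: "a \<noteq> b" "b \<in> A" using b by auto
    have c1: "card (A - {a}) = card A - 1" using a finA by simp
    have c1': "card (A - {b}) = card A - 1" using ab(2) finA by simp
    have i: "(A - {a}) \<inter> (A - {b}) = A - {a} - {b}" by blast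
    have ci: "card (A - {a} - {b}) = card A - 2" using a b finA by simp
    have F1: "A - {a} \<in> F"
    proof (rule less.hyps)
      show "card (A - {a}) < card A" using c1 c2 by linarith
      show "A - {a} \<subseteq> T" using less.prems(1) by blast
      show "A - {a} \<noteq> {}" using b by blast
    qed
    have F2: "A - {b} \<in> F"
    proof (rule less.hyps)
      show "card (A - {b}) < card A" using c1' c2 by linarith
      show "A - {b} \<subseteq> T" using less.prems(1) by blast
      show "A - {b} \<noteq> {}" using a ab by blast
    qed
    have e1: "card ((A - {a}) \<inter> (A - {b})) + 1 = card (A - {a})" unfolding i ci c1 using c2 by linarith
    have e2: "card (A - {a}) = card (A - {b})" using c1 c1' by simp
    have "(A - {a}) \<union> (A - {b}) \<in> F" using S2 F1 F2 e1 e2 by blast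
    moreover have "(A - {a}) \<union> (A - {b}) = A" using ab by blast
    ultimately show ?thesis by simp
  qed
qed


theorem mainTheorem8:
  fixes S :: "'a set" and F1 F2 :: "'a set set"
  assumes "S_pair S F1 F2"
  shows "\<forall>s\<in>S. \<forall>s'\<in>S.
           (S - {s} \<in> F2 \<or> (\<forall>t\<in>S - {s}. {t} \<in> F2)) \<and>
           (S - {s'} \<in> F2 \<or> (\<forall>t\<in>S - {s'}. {t} \<in> F2)) \<longrightarrow> s = s'"
proof (intro ballI impI)
  fix s s' assume s: "s \<in> S" and s': "s' \<in> S"
    and h: "(S - {s} \<in> F2 \<or> (\<forall>t\<in>S - {s}. {t} \<in> F2)) \<and>
           (S - {s'} \<in> F2 \<or> (\<forall>t\<in>S - {s'}. {t} \<in> F2))"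
  show "s = s'"
  proof (rule ccontr)
    assume ne: "s \<noteq> s'"
    have fin: "finite S" using assms unfolding S_pair_def by blast
    have ax: "S_axioms S F2" using assms unfolding S_pair_def by blast
    have S2: "\<forall>A\<in>F2. \<forall>B\<in>F2. card A = card B \<and> card (A \<inter> B) + 1 = card A \<longrightarrow> A \<union> B \<in> F2"
      using ax unfolding S_axioms_def by blast
    have S3b: "S \<notin> F2" using ax unfolding S_axioms_def by blast
    have lift: "\<And>x. \<forall>t\<in>S - {x}. {t} \<in> F2 \<Longrightarrow> S - {x} \<noteq> {} \<Longrightarrow> S - {x} \<in> F2"
    proof -
      fix x assume a1: "\<forall>t\<in>S - {x}. {t} \<in> F2" and a2: "S - {x} \<noteq> {}"
      have f: "finite (S - {x})" using fin by simp
      show "S - {x} \<in> F2" by (rule nonempty_subsets[OF S2 f a1 _ a2]) (rule subset_refl)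
    qed
    have n1: "S - {s} \<noteq> {}" using s' ne by blast
    have n2: "S - {s'} \<noteq> {}" using s ne by blast
    have A: "S - {s} \<in> F2" using h lift[OF _ n1] by blast
    have B: "S - {s'} \<in> F2" using h lift[OF _ n2] by blast
    have i: "(S - {s}) \<inter> (S - {s'}) = S - {s} - {s'}" by blast
    have ci: "card (S - {s} - {s'}) = card S - 2" using s s' ne fin by simp
    have c1: "card (S - {s}) = card S - 1" using s fin by simp
    have c1': "card (S - {s'}) = card S - 1" using s' fin by simp
    have "{s, s'} \<subseteq> S" using s s' by blast
    then have "card {s,s'} \<le> card S" using fin by (rule card_mono[rotated])
    then have c2: "card S \<ge> 2" using ne by simp
    have e1: "card ((S - {s}) \<inter> (S - {s'})) + 1 = card (S - {s})" unfolding i ci c1 using c2 by linarith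
    have e2: "card (S - {s}) = card (S - {s'})" using c1 c1' by simp
    have "(S - {s}) \<union> (S - {s'}) \<in> F2" using S2 A B e1 e2 by blast
    moreover have "(S - {s}) \<union> (S - {s'}) = S" using ne by blast
    ultimately show False using S3b by simp
  qed
qed

end
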